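(* For every $c\ge0$, every distribution $\mathcal{D}$ over $\mathbb{R}^k_{\ge0}$ and every mechanism $M$, there exists a $c$-expensive mechanism $M'$ with $\mathrm{Rev}(\mathcal{D},M')\ge\mathrm{Rev}(\mathcal{D},M)-c$.
   Context: Setting: one seller, one additive buyer, $k$ items; the buyer's value vector $\vec v\in\mathbb{R}^k_{\ge0}$ is drawn from a distribution $\mathcal{D}$. A mechanism $M$ is a set of options $(\vec q,p)$ with $\vec q\in[0,1]^k$, $p\in\mathbb{R}$, always containing the null option $(\vec 0,0)$; a buyer with values $\vec v$ selects an option maximizing $\vec v\cdot\vec q-p$ (ties broken arbitrarily; a maximizer is assumed to exist), and $\vec q^M(\vec v),p^M(\vec v)$ denote the allocation and price of the selected option. $\mathrm{Rev}(\mathcal{D},M)=\mathbb{E}_{\vec v\sim\mathcal{D}}[p^M(\vec v)]$. A mechanism is $c$-expensive if every option other than the null option $(\vec 0,0)$ has price at least $c$. *)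

theory Defs
  imports "HOL-Analysis.Analysis" "HOL-Probability.Probability"
begin

text \<open>Items are indexed by a finite type 'k; an option is a pair (allocation, price).\<close>

type_synonym 'k opt = "(real ^ 'k) \<times> real"

definition nonneg_vals :: "real ^ ('k::finite) \<Rightarrow> bool" where
  "nonneg_vals v \<longleftrightarrow> (\<forall>i. 0 \<le> v $ i)"

definition utility :: "real ^ ('k::finite) \<Rightarrow> 'k opt \<Rightarrow> real" where
  "utility v o' = inner v (fst o') - snd o'"

definition is_mechanism :: "('k::finite) opt set \<Rightarrow> bool" where
  "is_mechanism M \<longleftrightarrow> (0, 0) \<in> M \<and> (\<forall>(q, p) \<in> M. \<forall>i. 0 \<le> q $ i \<and> q $ i \<le> 1)"

definition selects :: "('k::finite) opt set \<Rightarrow> (real ^ 'k \<Rightarrow> 'k opt) \<Rightarrow> bool" where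
  "selects M sel \<longleftrightarrow> (\<forall>v. nonneg_vals v \<longrightarrow>
      sel v \<in> M \<and> (\<forall>o' \<in> M. utility v o' \<le> utility v (sel v)))"

definition Rev :: "(real ^ ('k::finite)) measure \<Rightarrow> (real ^ 'k \<Rightarrow> 'k opt) \<Rightarrow> real" where
  "Rev D sel = (\<integral>v. snd (sel v) \<partial>D)"

definition c_expensive :: "real \<Rightarrow> ('k::finite) opt set \<Rightarrow> bool" where
  "c_expensive c M \<longleftrightarrow> (\<forall>o' \<in> M. o' \<noteq> (0, 0) \<longrightarrow> c \<le> snd o')"

end

theory Submission
  imports Defs
begin

lemma util_cont: "continuous_on UNIV (\<lambda>o'. utility (v::real^'k::finite) o')"
  unfolding utility_def by (intro continuous_intros)

lemma inner_le_card:
  fixes v q :: "real^'k::finite"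
  assumes "\<forall>i. 0 \<le> q $ i \<and> q $ i \<le> 1"
  shows "inner v q \<le> real CARD('k) * norm v"
proof -
  have "inner v q = (\<Sum>i\<in>UNIV. v $ i * q $ i)" by (simp add: inner_vec_def)
  also have "\<dots> \<le> (\<Sum>i\<in>(UNIV::'k set). norm v)"
  proof -
    have "v $ i * q $ i \<le> norm v" for i
    proof -
    have "v $ i * q $ i \<le> \<bar>v $ i\<bar> * q $ i" using assms by (intro mult_right_mono) auto
    also have "\<dots> \<le> \<bar>v $ i\<bar>" using assms by (simp add: mult_left_le)
    also have "\<dots> \<le> norm v" by (rule component_le_norm_cart)
    finally show "v $ i * q $ i \<le> norm v" .
    qed
    then show ?thesis by (intro Groups_Big.sum_mono) auto
  qed
  finally show ?thesis by simp
qed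

context
  fixes c :: real and I :: "real set" and M :: "'k::finite opt set" and sel
  assumes c: "0 \<le> c" and I: "closed I" "I \<subseteq> {c..}"
    and mech: "is_mechanism M" and sel: "selects M sel"
begin

definition "SS = {o'\<in>M. snd o' \<in> I}"
definition "KK = insert (0,0) (closure SS)"

lemma closure_SS: "closure SS \<subseteq> {o'. (\<forall>i. 0 \<le> fst o' $ i \<and> fst o' $ i \<le> 1) \<and> snd o' \<in> I}"
proof (rule closure_minimal)
  show "SS \<subseteq> {o'. (\<forall>i. 0 \<le> fst o' $ i \<and> fst o' $ i \<le> 1) \<and> snd o' \<in> I}"
    using mech unfolding SS_def is_mechanism_def by auto
  have "closed {o'::'k opt. (\<forall>i. 0 \<le> fst o' $ i \<and> fst o' $ i \<le> 1)}"
    by (intro closed_Collect_all closed_Collect_conj closed_Collect_le continuous_intros)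
  moreover have "closed {o'::'k opt. snd o' \<in> I}"
    using closed_vimage_snd[OF I(1)] by (simp add: vimage_def)
  ultimately show "closed {o'::'k opt. (\<forall>i. 0 \<le> fst o' $ i \<and> fst o' $ i \<le> 1) \<and> snd o' \<in> I}"
    by (simp add: Collect_conj_eq closed_Int)
qed

lemma KK_props: "o' \<in> KK \<Longrightarrow> (\<forall>i. 0 \<le> fst o' $ i \<and> fst o' $ i \<le> 1) \<and> 0 \<le> snd o' \<and> (o' \<noteq> (0,0) \<longrightarrow> snd o' \<in> I)"
  using closure_SS I c unfolding KK_def by (auto simp: zero_vec_def)

lemma closed_KK: "closed KK"
  unfolding KK_def by (intro closed_insert closed_closure)

lemma KK_le_sel: "nonneg_vals v \<Longrightarrow> o' \<in> KK \<Longrightarrow> utility v o' \<le> utility v (sel v)"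
proof -
  assume v: "nonneg_vals v" and o: "o' \<in> KK"
  have "closure SS \<subseteq> {o'. utility v o' \<le> utility v (sel v)}"
  proof (rule closure_minimal)
    show "SS \<subseteq> {o'. utility v o' \<le> utility v (sel v)}"
      using sel v unfolding selects_def SS_def by auto
    show "closed {o'. utility v o' \<le> utility v (sel v)}"
      unfolding utility_def by (intro closed_Collect_le continuous_intros)
  qed
  moreover have "utility v (0,0) \<le> utility v (sel v)"
    using sel v mech unfolding selects_def is_mechanism_def by auto
  ultimately show ?thesis using o unfolding KK_def by auto
qed

definition "CC B = KK \<inter> (cbox 0 1 \<times> {0..real CARD('k) * B})"

lemma compact_CC: "compact (CC B)"
  unfolding CC_def by (intro closed_Int_compact closed_KK compact_Times compact_cbox compact_Icc)

lemma in_CC: "o' \<in> KK \<Longrightarrow> 0 \<le> utility v o' \<Longrightarrow> norm v \<le> B \<Longrightarrow> o' \<in> CC B"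
proof -
  assume o: "o' \<in> KK" and u: "0 \<le> utility v o'" and B: "norm v \<le> B"
  have p: "\<forall>i. 0 \<le> fst o' $ i \<and> fst o' $ i \<le> 1" "0 \<le> snd o'" using KK_props[OF o] by auto
  have "snd o' \<le> inner v (fst o')" using u by (simp add: utility_def)
  also have "\<dots> \<le> real CARD('k) * norm v" using inner_le_card p(1) by blast
  also have "\<dots> \<le> real CARD('k) * B" using B by (simp add: mult_left_mono)
  finally show ?thesis using o p unfolding CC_def
    by (cases o') (auto simp: mem_box_cart)
qed

lemma CC_mono: assumes "B1 \<le> B2" shows "CC B1 \<subseteq> CC B2"
proof -
  have "real CARD('k) * B1 \<le> real CARD('k) * B2" using assms by (intro mult_left_mono) auto
  then have "{0..real CARD('k) * B1} \<subseteq> {0..real CARD('k) * B2}"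
    by (meson atLeastAtMost_iff order_trans subsetI)
  then have "cbox 0 1 \<times> {0..real CARD('k) * B1} \<subseteq> cbox 0 (1::real^'k) \<times> {0..real CARD('k) * B2}"
    by (intro Sigma_mono) auto
  then show ?thesis unfolding CC_def by blast
qed

definition "AA v = {o'\<in>KK. \<forall>o''\<in>KK. utility v o'' \<le> utility v o'}"

lemma util_null: "utility v (0,0) = 0" by (simp add: utility_def)

lemma null_KK: "(0,0) \<in> KK" unfolding KK_def by simp

lemma AA_sub: "AA v \<subseteq> CC (norm v)"
proof
  fix o' assume o: "o' \<in> AA v"
  then have "o' \<in> KK" "utility v (0,0) \<le> utility v o'" using null_KK unfolding AA_def by auto
  then show "o' \<in> CC (norm v)" using in_CC[of o' v "norm v"] util_null[of v] by auto
qed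

lemma closed_AA: "closed (AA v)"
proof -
  have "AA v = KK \<inter> (\<Inter>o''\<in>KK. {o'. utility v o'' \<le> utility v o'})"
    unfolding AA_def by auto
  also have "closed \<dots>"
    unfolding utility_def by (intro closed_Int closed_KK closed_INT ballI closed_Collect_le continuous_intros) 
  finally show ?thesis .
qed

lemma AA_ne: "AA v \<noteq> {}"
proof -
  let ?K = "CC (norm v) \<inter> {o'. 0 \<le> utility v o'}"
  have "compact ?K" unfolding utility_def
    by (intro compact_Int_closed compact_CC closed_Collect_le continuous_intros)
  moreover have "(0,0) \<in> ?K" using in_CC[OF null_KK, of v "norm v"] util_null[of v] by simp
  ultimately obtain x where x: "x \<in> ?K" "\<forall>y\<in>?K. utility v y \<le> utility v x"
    using continuous_attains_sup[of ?K "utility v"] util_cont continuous_on_subset by blast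
  have "x \<in> AA v"
    unfolding AA_def
  proof (safe)
    show "x \<in> KK" using x CC_def by auto
    fix o'' assume o: "o'' \<in> KK"
    show "utility v o'' \<le> utility v x"
    proof (cases "0 \<le> utility v o''")
      case True then show ?thesis using x in_CC[OF o True] by auto
    next
      case False then show ?thesis using x by auto
    qed
  qed
  then show ?thesis by auto
qed

lemma maxsel_ex: "\<exists>o'. o' \<in> AA v \<and> (\<forall>o''\<in>AA v. snd o'' \<le> snd o')"
proof -
  have "compact (AA v)" using compact_CC AA_sub closed_AA
    by (metis compact_Int_closed inf.absorb_iff2)
  moreover have "continuous_on (AA v) snd" by (intro continuous_intros)
  ultimately show ?thesis
    using continuous_attains_sup[of "AA v" snd] AA_ne by blast
qed

definition "maxsel v = (SOME o'. o' \<in> AA v \<and> (\<forall>o''\<in>AA v. snd o'' \<le> snd o'))"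

lemma maxsel: "maxsel v \<in> AA v" "\<And>o''. o'' \<in> AA v \<Longrightarrow> snd o'' \<le> snd (maxsel v)"
  using someI_ex[OF maxsel_ex[of v]] unfolding maxsel_def by auto

lemma usc: "closed {v. a \<le> snd (maxsel v)}"
  unfolding closed_sequential_limits
proof (intro allI impI, elim conjE)
  fix x :: "nat \<Rightarrow> real^'k" and l
  assume xs: "\<forall>n. x n \<in> {v. a \<le> snd (maxsel v)}" and lim: "x \<longlonglongrightarrow> l"
  obtain B where B: "\<And>n. norm (x n) \<le> B"
    using lim by (metis Cauchy_Bseq LIMSEQ_imp_Cauchy BseqE less_imp_le)
  have inC: "\<forall>n. maxsel (x n) \<in> CC B"
  proof
    fix n
    have "maxsel (x n) \<in> CC (norm (x n))" using maxsel(1) AA_sub by blast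
    then show "maxsel (x n) \<in> CC B" using CC_mono[OF B[of n]] by blast
  qed
  obtain l0 r where l0: "l0 \<in> CC B" "strict_mono r" "((\<lambda>n. maxsel (x n)) \<circ> r) \<longlonglongrightarrow> l0"
    using seq_compactE[OF compact_imp_seq_compact[OF compact_CC] inC] by blast
  have xr: "(x \<circ> r) \<longlonglongrightarrow> l" using LIMSEQ_subseq_LIMSEQ[OF lim l0(2)] .
  have "l0 \<in> AA l" unfolding AA_def
  proof (safe)
    show "l0 \<in> KK" using l0 CC_def by auto
    fix o'' assume o: "o'' \<in> KK"
    have le: "\<And>n. utility ((x \<circ> r) n) o'' \<le> utility ((x \<circ> r) n) (((\<lambda>n. maxsel (x n)) \<circ> r) n)"
      using maxsel(1) o unfolding AA_def by auto
    have t1: "(\<lambda>n. utility ((x \<circ> r) n) o'') \<longlonglongrightarrow> utility l o''"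
      unfolding utility_def by (intro tendsto_intros xr)
    have t2: "(\<lambda>n. utility ((x \<circ> r) n) (((\<lambda>n. maxsel (x n)) \<circ> r) n)) \<longlonglongrightarrow> utility l l0"
      unfolding utility_def by (intro tendsto_intros xr l0(3))
    show "utility l o'' \<le> utility l l0"
      using LIMSEQ_le[OF t1 t2] le by auto
  qed
  moreover have "a \<le> snd l0"
  proof (rule LIMSEQ_le_const)
    show "(\<lambda>n. snd (((\<lambda>n. maxsel (x n)) \<circ> r) n)) \<longlonglongrightarrow> snd l0"
      by (intro tendsto_intros l0(3))
    show "\<exists>N. \<forall>n\<ge>N. a \<le> snd (((\<lambda>n. maxsel (x n)) \<circ> r) n)" using xs by auto
  qed
  ultimately show "l \<in> {v. a \<le> snd (maxsel v)}" using maxsel(2)[of l0 l] by auto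
qed

lemma maxsel_meas: "(\<lambda>v. snd (maxsel v)) \<in> borel_measurable borel"
  by (rule borel_measurableI_ge) (simp add: borel_closed usc)


definition "selp v = (if nonneg_vals v \<and> snd (sel v) \<in> I then sel v else maxsel v)"

lemma KK_mech: "is_mechanism KK"
  unfolding is_mechanism_def using null_KK KK_props by auto

lemma KK_exp: "c_expensive c KK"
  unfolding c_expensive_def using KK_props I by force

lemma selp_selects: "selects KK selp"
  unfolding selects_def
proof (intro allI impI)
  fix v :: "real^'k" assume v: "nonneg_vals v"
  show "selp v \<in> KK \<and> (\<forall>o'\<in>KK. utility v o' \<le> utility v (selp v))"
  proof (cases "snd (sel v) \<in> I")
    case True
    have "sel v \<in> M" using sel v unfolding selects_def by auto
    then have "sel v \<in> SS" using True unfolding SS_def by auto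
    then have "sel v \<in> KK" unfolding KK_def using closure_subset by blast
    then show ?thesis using True v KK_le_sel[OF v] unfolding selp_def by auto
  next
    case False
    then show ?thesis using maxsel(1)[of v] unfolding selp_def AA_def by auto
  qed
qed

lemma closed_nonneg: "closed {v::real^'k. nonneg_vals v}"
  unfolding nonneg_vals_def by (intro closed_Collect_all closed_Collect_le continuous_intros)

lemma selp_meas:
  fixes D :: "(real^'k) measure"
  assumes "sets D = sets borel" "(\<lambda>v. snd (sel v)) \<in> borel_measurable D"
  shows "(\<lambda>v. snd (selp v)) \<in> borel_measurable D"
proof -
  have eq: "borel_measurable D = borel_measurable (borel :: (real^'k) measure)"
    by (rule measurable_cong_sets) (use assms in auto)
  have X: "(\<lambda>v. snd (sel v)) \<in> borel_measurable borel" using assms(2) unfolding eq .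
  have A: "({v. nonneg_vals v} \<inter> ((\<lambda>v. snd (sel v)) -` I \<inter> space borel)) \<inter> space borel \<in> sets borel"
    using measurable_sets[OF X borel_closed[OF I(1)]] borel_closed[OF closed_nonneg] by auto
  have "(\<lambda>v. if v \<in> {v. nonneg_vals v} \<inter> ((\<lambda>v. snd (sel v)) -` I \<inter> space borel)
          then snd (sel v) else snd (maxsel v)) \<in> borel_measurable borel"
    by (rule measurable_If_set[OF X maxsel_meas A])
  moreover have "(\<lambda>v. if v \<in> {v. nonneg_vals v} \<inter> ((\<lambda>v. snd (sel v)) -` I \<inter> space borel)
          then snd (sel v) else snd (maxsel v)) = (\<lambda>v. snd (selp v))"
    unfolding selp_def by auto
  ultimately have "(\<lambda>v. snd (selp v)) \<in> borel_measurable borel" by simp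
  then show ?thesis unfolding eq .
qed

lemma selp_nonneg: "0 \<le> snd (selp v)"
  unfolding selp_def using maxsel(1)[of v] KK_props I c unfolding AA_def by auto

lemma selp_ge: "nonneg_vals v \<Longrightarrow> (if snd (sel v) \<in> I then snd (sel v) else 0) \<le> snd (selp v)"
  using selp_nonneg[of v] unfolding selp_def by (auto split: if_splits)

lemma selp_le: "0 \<le> T \<Longrightarrow> I \<subseteq> {..T} \<Longrightarrow> snd (selp v) \<le> T"
proof -
  assume T: "0 \<le> T" "I \<subseteq> {..T}"
  have m: "maxsel v \<in> KK" using maxsel(1)[of v] unfolding AA_def by auto
  have "snd (maxsel v) \<le> T"
  proof (cases "maxsel v = (0,0)")
    case True then show ?thesis using T by simp
  next
    case False then have "snd (maxsel v) \<in> I" using KK_props[OF m] by blast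
    then show ?thesis using T by auto
  qed
  then show ?thesis unfolding selp_def using T by auto
qed

lemma master:
  fixes D :: "(real^'k) measure"
  assumes D: "prob_space D" "sets D = sets borel" "AE v in D. nonneg_vals v"
    "integrable D (\<lambda>v. snd (sel v))"
  and cases: "(\<exists>T\<ge>0. I \<subseteq> {..T}) \<or> (AE v in D. snd (sel v) \<in> I)"
  and hI: "integral\<^sup>L D (\<lambda>v. if snd (sel v) \<in> I then snd (sel v) else 0) \<ge> Rev D sel - c"
  shows "\<exists>M' sel'. is_mechanism M' \<and> selects M' sel' \<and> c_expensive c M'
           \<and> integrable D (\<lambda>v. snd (sel' v)) \<and> Rev D sel' \<ge> Rev D sel - c"
proof -
  interpret prob_space D by (rule D(1))
  have Xm: "(\<lambda>v. snd (sel v)) \<in> borel_measurable D" using D(4) by auto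
  have pm: "(\<lambda>v. snd (selp v)) \<in> borel_measurable D" by (rule selp_meas[OF D(2) Xm])
  have hm: "(\<lambda>v. if snd (sel v) \<in> I then snd (sel v) else 0) \<in> borel_measurable D"
  proof -
    have "(\<lambda>v. snd (sel v)) -` I \<inter> space D \<in> sets D"
      using measurable_sets[OF Xm borel_closed[OF I(1)]] .
    from measurable_If_set[OF Xm borel_measurable_const this]
    show ?thesis by (simp add: vimage_def)
  qed
  have hint: "integrable D (\<lambda>v. if snd (sel v) \<in> I then snd (sel v) else 0)"
    by (rule Bochner_Integration.integrable_bound[OF D(4) hm]) auto
  have pint: "integrable D (\<lambda>v. snd (selp v))"
    using cases
  proof
    assume "\<exists>T\<ge>0. I \<subseteq> {..T}"
    then obtain T where T: "0 \<le> T" "I \<subseteq> {..T}" by auto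
    show ?thesis
    proof (rule Bochner_Integration.integrable_bound[OF integrable_const[of T] pm])
      show "AE v in D. norm (snd (selp v)) \<le> norm T"
        using selp_le[OF T] selp_nonneg T by auto
    qed
  next
    assume ae: "AE v in D. snd (sel v) \<in> I"
    show ?thesis
    proof (rule integrable_cong_AE_imp[OF D(4) pm])
      show "AE v in D. snd (sel v) = snd (selp v)"
        using ae D(3) by eventually_elim (auto simp: selp_def)
    qed
  qed
  have ae2: "AE v in D. (if snd (sel v) \<in> I then snd (sel v) else 0) \<le> snd (selp v)"
    using D(3) by eventually_elim (rule selp_ge)
  have "integral\<^sup>L D (\<lambda>v. if snd (sel v) \<in> I then snd (sel v) else 0) \<le> Rev D selp" unfolding Rev_def
    by (rule integral_mono_AE[OF hint pint ae2])
  then have "Rev D sel - c \<le> Rev D selp" using hI by linarith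
  then show ?thesis using KK_mech selp_selects KK_exp pint by blast
qed

end

theorem claim4p2:
  fixes c :: real and D :: "(real ^ 'k) measure"
    and M :: "'k opt set" and sel :: "real ^ 'k \<Rightarrow> 'k opt"
  assumes "0 \<le> c"
    and "prob_space D" and "sets D = sets borel"
    and "AE v in D. nonneg_vals v"
    and "is_mechanism M" and "selects M sel"
    and "integrable D (\<lambda>v. snd (sel v))"
  shows "\<exists>M' sel'. is_mechanism M' \<and> selects M' sel' \<and> c_expensive c M'
           \<and> integrable D (\<lambda>v. snd (sel' v)) \<and> Rev D sel' \<ge> Rev D sel - c"
proof -
  interpret prob_space D by fact
  define X where "X = (\<lambda>v. snd (sel v))"
  have Xi: "integrable D X" using assms(7) unfolding X_def .
  then have Xm[measurable]: "X \<in> borel_measurable D" by auto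
  define h where "h = (\<lambda>v. if X v \<in> {c..} then X v else 0)"
  have hm[measurable]: "h \<in> borel_measurable D" unfolding h_def by measurable
  have hi: "integrable D h" by (rule Bochner_Integration.integrable_bound[OF Xi hm]) (auto simp: h_def)
  have RevX: "Rev D sel = integral\<^sup>L D X" unfolding Rev_def X_def ..
  show ?thesis
  proof (cases "integral\<^sup>L D X - c < integral\<^sup>L D h")
    case True
    define s where "s = (\<lambda>(n::nat) v. if X v \<in> {c..real n} then X v else 0)"
    have sm: "s n \<in> borel_measurable D" for n unfolding s_def by measurable
    have "(\<lambda>n. integral\<^sup>L D (s n)) \<longlonglongrightarrow> integral\<^sup>L D h"
    proof (rule integral_dominated_convergence[where w="\<lambda>v. norm (X v)"])
      show "h \<in> borel_measurable D" by (rule hm)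
      show "\<And>i. s i \<in> borel_measurable D" by (rule sm)
      show "integrable D (\<lambda>v. norm (X v))" using Xi by auto
      show "AE v in D. (\<lambda>n. s n v) \<longlonglongrightarrow> h v"
      proof (rule AE_I2, rule tendsto_eventually)
        fix v
        show "\<forall>\<^sub>F n in sequentially. s n v = h v"
          unfolding eventually_sequentially
        proof (intro exI allI impI)
          fix n assume "nat \<lceil>X v\<rceil> \<le> n"
          then have "X v \<le> real n"
            by (metis of_nat_le_iff real_nat_ceiling_ge order_trans)
          then show "s n v = h v" unfolding s_def h_def by auto
        qed
      qed
      show "\<And>n. AE v in D. norm (s n v) \<le> norm (X v)" unfolding s_def by auto
    qed
    from order_tendstoD(1)[OF this True] obtain N where
      N: "\<And>n. n \<ge> N \<Longrightarrow> integral\<^sup>L D X - c < integral\<^sup>L D (s n)"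
      unfolding eventually_sequentially by auto
    have cl: "closed {c..real N}" "{c..real N} \<subseteq> {c..}" by auto
    show ?thesis
    proof (rule master[OF assms(1) cl assms(5,6,2,3,4,7)])
      show "(\<exists>T\<ge>0. {c..real N} \<subseteq> {..T}) \<or> (AE v in D. snd (sel v) \<in> {c..real N})"
        by (intro disjI1 exI[of _ "real N"]) auto
      show "Rev D sel - c \<le> integral\<^sup>L D (\<lambda>v. if snd (sel v) \<in> {c..real N} then snd (sel v) else 0)"
        using N[of N] RevX unfolding s_def X_def by auto
    qed
  next
    case False
    define d where "d = (\<lambda>v. c - (if X v \<in> {c..} then 0 else X v))"
    have dm: "d \<in> borel_measurable D" unfolding d_def by measurable
    have d_eq: "d = (\<lambda>v. c - (X v - h v))" unfolding d_def h_def by auto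
    have di: "integrable D d" unfolding d_eq using Xi hi by auto
    have dnn: "\<And>v. 0 \<le> d v" unfolding d_def using assms(1) by auto
    have "integral\<^sup>L D d = c - (integral\<^sup>L D X - integral\<^sup>L D h)"
      unfolding d_eq using Xi hi prob_space by (simp add: integral_diff)
    then have "integral\<^sup>L D d \<le> 0" using False by simp
    moreover have "0 \<le> integral\<^sup>L D d" using dnn by (simp add: integral_nonneg_AE)
    ultimately have "integral\<^sup>L D d = 0" by simp
    then have "AE v in D. d v = 0" using integral_nonneg_eq_0_iff_AE[OF di] dnn by auto
    then have ae: "AE v in D. snd (sel v) \<in> {c..}"
      by eventually_elim (auto simp: d_def X_def split: if_splits)
    have cl: "closed {c..}" "{c..} \<subseteq> {c..}" by auto
    show ?thesis
    proof (rule master[OF assms(1) cl assms(5,6,2,3,4,7)])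
      show "(\<exists>T\<ge>0. {c..} \<subseteq> {..T}) \<or> (AE v in D. snd (sel v) \<in> {c..})"
        using ae by auto
      have "integral\<^sup>L D (\<lambda>v. if snd (sel v) \<in> {c..} then snd (sel v) else 0) = integral\<^sup>L D X"
      proof -
        have m1: "(\<lambda>v. if snd (sel v) \<in> {c..} then snd (sel v) else 0) \<in> borel_measurable D"
          using hm unfolding h_def X_def .
        have m2: "(\<lambda>v. snd (sel v)) \<in> borel_measurable D" using Xm unfolding X_def .
        show ?thesis unfolding X_def
          by (rule integral_cong_AE[OF m1 m2]) (use ae in \<open>eventually_elim, auto\<close>)
      qed
      then show "Rev D sel - c \<le> integral\<^sup>L D (\<lambda>v. if snd (sel v) \<in> {c..} then snd (sel v) else 0)"
        using RevX assms(1) by simp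
    qed
  qed
qed

end
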